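(* Let $A=\mathbb{F}_2(\mathbb{Z}_3)$ with calculus as in the context. Then the element $$g_B=(1+y)\,\omega^1\otimes\omega^1+(1+x+y)(\omega^1\otimes\omega^2+\omega^2\otimes\omega^1)+(1+x)\,\omega^2\otimes\omega^2$$ is the unique invertible, central, quantum symmetric metric. It admits exactly four QLCs; three of them are flat and the fourth has curvature $R_\nabla\eta=\mathrm{Vol}\otimes\eta$ for all $\eta\in\Omega^1$. The quantum dimension $(\ ,\ )(g_B)$ is $0$, and for each of the four QLCs the Laplacian $\Delta$ is identically zero.
   Context: Algebra B: $A$ is the commutative algebra over $\mathbb{F}_2$ with basis $1,x,y$ and $x^2=x$, $y^2=y$, $xy=0$ (the functions on $\mathbb{Z}_3$). $\Omega^1$ is the universal calculus, free as a left module on $\omega^1=\mathrm{d}x$, $\omega^2=\mathrm{d}y$, with $\omega^1x=(1+x)\omega^1$, $\omega^1y=x\omega^2$, $\omega^2x=y\omega^1$, $\omega^2y=(1+y)\omega^2$. $\Omega^2=A\,\mathrm{Vol}$ free of rank one with central basis $\mathrm{Vol}$, $\omega^1\wedge\omega^1=(1+x)\mathrm{Vol}$, $\omega^1\wedge\omega^2=\omega^2\wedge\omega^1=(x+y)\mathrm{Vol}$, $\omega^2\wedge\omega^2=(1+y)\mathrm{Vol}$, $\mathrm{d}\omega^i=0$. Definitions: $g\in\Omega^1\otimes_A\Omega^1$ is central if $ag=ga$ for all $a$; quantum symmetric if $\wedge(g)=0$; an invertible metric if there is a bimodule map $(\ ,\ ):\Omega^1\otimes_A\Omega^1\to A$ with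 $((\eta,\ )\otimes\mathrm{id})g=\eta=(\mathrm{id}\otimes(\ ,\eta))g$ for all $\eta$. A QLC for $g$ is a bimodule connection ($\nabla(a\omega)=a\nabla\omega+\mathrm{d}a\otimes\omega$, $\nabla(\omega a)=(\nabla\omega)a+\sigma(\omega\otimes\mathrm{d}a)$ for a bimodule map $\sigma$) which is torsion free ($\wedge\nabla=\mathrm{d}$ on $\Omega^1$) and metric compatible ($(\nabla\otimes\mathrm{id})g+(\sigma\otimes\mathrm{id})(\mathrm{id}\otimes\nabla)g=0$). Curvature $R_\nabla=(\mathrm{d}\otimes\mathrm{id}-\mathrm{id}\wedge\nabla)\nabla$; flat means $R_\nabla=0$. Laplacian $\Delta=(\ ,\ )\nabla\mathrm{d}:A\to A$; quantum dimension $(\ ,\ )(g)$. *)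

theory Defs
  imports Main "HOL-Library.Z2" "HOL-Library.Function_Algebras"
begin

text \<open>An element  A a0 a1 a2  stands for  a0*1 + a1*x + a2*y  with coefficients in F_2
  (the type bit), multiplication determined by  x^2 = x, y^2 = y, xy = yx = 0.\<close>

datatype A = A bit bit bit

fun c0 :: "A \<Rightarrow> bit" where "c0 (A a b c) = a"
fun c1 :: "A \<Rightarrow> bit" where "c1 (A a b c) = b"
fun c2 :: "A \<Rightarrow> bit" where "c2 (A a b c) = c"

lemma A_eq_iff: "u = v \<longleftrightarrow> c0 u = c0 v \<and> c1 u = c1 v \<and> c2 u = c2 v"
  by (cases u; cases v) auto

instantiation A :: comm_ring_1
begin
definition "zero_A = A 0 0 0"
definition "one_A = A 1 0 0"
definition "plus_A u v = A (c0 u + c0 v) (c1 u + c1 v) (c2 u + c2 v)"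
definition "uminus_A u = A (- c0 u) (- c1 u) (- c2 u)"
definition "minus_A u v = A (c0 u - c0 v) (c1 u - c1 v) (c2 u - c2 v)"
definition "times_A u v = A (c0 u * c0 v)
     (c0 u * c1 v + c1 u * c0 v + c1 u * c1 v)
     (c0 u * c2 v + c2 u * c0 v + c2 u * c2 v)"
instance
  apply standard
  apply (simp_all only: A_eq_iff zero_A_def one_A_def plus_A_def uminus_A_def
      minus_A_def times_A_def c0.simps c1.simps c2.simps)
  apply (algebra | simp)+
  done
end

definition xA :: A where "xA = A 0 1 0"
definition yA :: A where "yA = A 0 0 1"
definition sc :: "bit \<Rightarrow> A" where "sc b = A b 0 0"

section \<open>One-forms: free left module on omega^1 = dx, omega^2 = dy\<close>

datatype ix = I1 | I2

lemma UNIV_ix: "(UNIV :: ix set) = {I1, I2}"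
  using ix.exhaust by auto

instance ix :: finite
  by standard (simp add: UNIV_ix)

text \<open>An element of Omega^1 is its coefficient vector w.r.t. the left basis omega^1, omega^2.\<close>
type_synonym Om1 = "ix \<Rightarrow> A"
text \<open>An element of Omega^1 (x)_A Omega^1 is its coefficient matrix t i j w.r.t. the
  left basis omega^i (x) omega^j.\<close>
type_synonym T2 = "ix \<Rightarrow> ix \<Rightarrow> A"
text \<open>Omega^2 = A Vol is represented by the coefficient of Vol (type A).\<close>

definition e :: "ix \<Rightarrow> Om1" where "e i = (\<lambda>k. if k = i then 1 else 0)"

definition lmul :: "A \<Rightarrow> Om1 \<Rightarrow> Om1" where "lmul a w = (\<lambda>k. a * w k)"

text \<open>The bimodule relations: omega^i x and omega^i y.\<close>
fun om_x :: "ix \<Rightarrow> Om1" where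
  "om_x I1 = lmul (1 + xA) (e I1)"
| "om_x I2 = lmul yA (e I1)"
fun om_y :: "ix \<Rightarrow> Om1" where
  "om_y I1 = lmul xA (e I2)"
| "om_y I2 = lmul (1 + yA) (e I2)"

text \<open>omega^i a for a = a0 + a1 x + a2 y.\<close>
definition gen_r :: "ix \<Rightarrow> A \<Rightarrow> Om1" where
  "gen_r i a = lmul (sc (c0 a)) (e i) + lmul (sc (c1 a)) (om_x i) + lmul (sc (c2 a)) (om_y i)"

definition rmul :: "Om1 \<Rightarrow> A \<Rightarrow> Om1" where
  "rmul w a = (\<lambda>k. \<Sum>i\<in>UNIV. w i * gen_r i a k)"

definition d0 :: "A \<Rightarrow> Om1" where
  "d0 a = (\<lambda>i. case i of I1 \<Rightarrow> sc (c1 a) | I2 \<Rightarrow> sc (c2 a))"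

text \<open>alpha (x)_A beta in coordinates: alpha_i omega^i (x) beta_j omega^j = alpha_i (omega^i beta_j) (x) omega^j.\<close>
definition tens :: "Om1 \<Rightarrow> Om1 \<Rightarrow> T2" where
  "tens \<alpha> \<beta> = (\<lambda>k j. \<Sum>i\<in>UNIV. \<alpha> i * gen_r i (\<beta> j) k)"

definition lmulT :: "A \<Rightarrow> T2 \<Rightarrow> T2" where "lmulT a t = (\<lambda>i j. a * t i j)"

definition rmulT :: "T2 \<Rightarrow> A \<Rightarrow> T2" where
  "rmulT t a = (\<Sum>i\<in>UNIV. \<Sum>j\<in>UNIV. lmulT (t i j) (tens (e i) (rmul (e j) a)))"

text \<open>omega^i wedge omega^j = W i j Vol.\<close>
fun W :: "ix \<Rightarrow> ix \<Rightarrow> A" where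
  "W I1 I1 = 1 + xA"
| "W I1 I2 = xA + yA"
| "W I2 I1 = xA + yA"
| "W I2 I2 = 1 + yA"

definition wedgeT :: "T2 \<Rightarrow> A" where
  "wedgeT t = (\<Sum>i\<in>UNIV. \<Sum>j\<in>UNIV. t i j * W i j)"

definition wedge :: "Om1 \<Rightarrow> Om1 \<Rightarrow> A" where "wedge \<alpha> \<beta> = wedgeT (tens \<alpha> \<beta>)"

text \<open>d on one-forms, using d omega^i = 0: d(a_i omega^i) = da_i wedge omega^i.\<close>
definition d1 :: "Om1 \<Rightarrow> A" where
  "d1 w = (\<Sum>i\<in>UNIV. wedge (d0 (w i)) (e i))"

text \<open>Column of a 2-tensor: t = sum_l (col t l) (x) omega^l.\<close>
definition col :: "T2 \<Rightarrow> ix \<Rightarrow> Om1" where "col t l = (\<lambda>k. t k l)"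

definition central :: "T2 \<Rightarrow> bool" where
  "central g \<longleftrightarrow> (\<forall>a. lmulT a g = rmulT g a)"

definition quantum_symmetric :: "T2 \<Rightarrow> bool" where
  "quantum_symmetric g \<longleftrightarrow> wedgeT g = 0"

definition bimodule_map_A :: "(T2 \<Rightarrow> A) \<Rightarrow> bool" where
  "bimodule_map_A ip \<longleftrightarrow> (\<forall>s t. ip (s + t) = ip s + ip t)
     \<and> (\<forall>a t. ip (lmulT a t) = a * ip t) \<and> (\<forall>a t. ip (rmulT t a) = ip t * a)"

text \<open>ip is an inverse of g:  ((eta, ) (x) id) g = eta = (id (x) ( , eta)) g.\<close>
definition inverse_of :: "T2 \<Rightarrow> (T2 \<Rightarrow> A) \<Rightarrow> bool" where
  "inverse_of g ip \<longleftrightarrow> bimodule_map_A ip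
     \<and> (\<forall>\<eta>. (\<lambda>j. \<Sum>i\<in>UNIV. ip (tens \<eta> (lmul (g i j) (e i)))) = \<eta>)
     \<and> (\<forall>\<eta>. (\<Sum>i\<in>UNIV. \<Sum>j\<in>UNIV. lmul (g i j) (rmul (e i) (ip (tens (e j) \<eta>)))) = \<eta>)"

definition invertible_metric :: "T2 \<Rightarrow> bool" where
  "invertible_metric g \<longleftrightarrow> (\<exists>ip. inverse_of g ip)"

definition bimodule_map_T :: "(T2 \<Rightarrow> T2) \<Rightarrow> bool" where
  "bimodule_map_T s \<longleftrightarrow> (\<forall>t u. s (t + u) = s t + s u)
     \<and> (\<forall>a t. s (lmulT a t) = lmulT a (s t)) \<and> (\<forall>a t. s (rmulT t a) = rmulT (s t) a)"

definition bimodule_connection :: "(Om1 \<Rightarrow> T2) \<Rightarrow> (T2 \<Rightarrow> T2) \<Rightarrow> bool" where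
  "bimodule_connection nab sig \<longleftrightarrow>
     (\<forall>w v. nab (w + v) = nab w + nab v)
   \<and> (\<forall>a w. nab (lmul a w) = lmulT a (nab w) + tens (d0 a) w)
   \<and> bimodule_map_T sig
   \<and> (\<forall>a w. nab (rmul w a) = rmulT (nab w) a + sig (tens w (d0 a)))"

definition torsion_free :: "(Om1 \<Rightarrow> T2) \<Rightarrow> bool" where
  "torsion_free nab \<longleftrightarrow> (\<forall>w. wedgeT (nab w) = d1 w)"

text \<open>Omega^1 (x) Omega^1 (x) Omega^1 is represented as l |-> (element of T2), meaning
  sum_l z_l (x) omega^l. Characteristic 2: minus = plus.
  Slot l of (nabla (x) id) g is nab (col g l); slot l of (id (x) nabla) g is
  sum_ij (g_ij omega^i) (x) col (nab omega^j) l.\<close>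
definition metric_compatible :: "T2 \<Rightarrow> (Om1 \<Rightarrow> T2) \<Rightarrow> (T2 \<Rightarrow> T2) \<Rightarrow> bool" where
  "metric_compatible g nab sig \<longleftrightarrow> (\<forall>l.
     nab (col g l) + sig (\<Sum>i\<in>UNIV. \<Sum>j\<in>UNIV. tens (lmul (g i j) (e i)) (col (nab (e j)) l)) = 0)"

definition QLC :: "T2 \<Rightarrow> ((Om1 \<Rightarrow> T2) \<times> (T2 \<Rightarrow> T2)) set" where
  "QLC g = {(nab, sig). bimodule_connection nab sig \<and> torsion_free nab \<and> metric_compatible g nab sig}"

text \<open>Omega^2 (x)_A Omega^1 = A Vol (x) Omega^1 is identified with Omega^1 via
  sum_m c_m Vol (x) omega^m  |->  (c_m)_m;  so  Vol (x) eta  corresponds to  eta.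
  Curvature R = (d (x) id - id wedge nabla) nabla, in char 2.\<close>
definition curvature :: "(Om1 \<Rightarrow> T2) \<Rightarrow> Om1 \<Rightarrow> Om1" where
  "curvature nab w = (\<lambda>m. d1 (col (nab w) m)
      + (\<Sum>j\<in>UNIV. wedge (col (nab w) j) (col (nab (e j)) m)))"

definition laplacian :: "(T2 \<Rightarrow> A) \<Rightarrow> (Om1 \<Rightarrow> T2) \<Rightarrow> A \<Rightarrow> A" where
  "laplacian ip nab a = ip (nab (d0 a))"

fun gB :: T2 where
  "gB I1 I1 = 1 + yA"
| "gB I1 I2 = 1 + xA + yA"
| "gB I2 I1 = 1 + xA + yA"
| "gB I2 I2 = 1 + xA"

end

theory Submission imports Defs begin

lemma bit_add_self: "(x::bit) + x = 0" "(x::bit) + (x + y) = y"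
  by (cases x; simp)+
lemma bit_mult_self: "(x::bit) * x = x" "(x::bit) * (x * y) = x * y"
  by (cases x; simp)+

lemma bit_01: "((0::bit) = 1) = False" "((1::bit) = 0) = False" by simp_all
lemmas bring = algebra_simps bit_add_self bit_mult_self mult_1_left mult_1_right add_0_left add_0_right
  mult_zero_left mult_zero_right one_add_one bit_2_eq_0

definition P :: "bit \<Rightarrow> bit \<Rightarrow> bit \<Rightarrow> A" where "P u v w = A u (u+v) (u+w)"

lemma P_eq[simp]: "P u v w = P u' v' w' \<longleftrightarrow> u = u' \<and> v = v' \<and> w = w'"
  by (auto simp: P_def)
lemma P_add[simp]: "P u v w + P u' v' w' = P (u+u') (v+v') (w+w')"
  unfolding P_def plus_A_def by (simp only: c0.simps c1.simps c2.simps A.inject simp_thms bring)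
lemma P_mult[simp]: "P u v w * P u' v' w' = P (u*u') (v*v') (w*w')"
  unfolding P_def times_A_def by (simp only: c0.simps c1.simps c2.simps A.inject simp_thms bring)
lemma P_uminus[simp]: "- P u v w = P u v w"
  unfolding P_def uminus_A_def by simp
lemma P_minus[simp]: "P u v w - P u' v' w' = P (u+u') (v+v') (w+w')"
  unfolding P_def minus_A_def by (simp only: c0.simps c1.simps c2.simps A.inject simp_thms bring minus_bit_def)
lemma P_0: "0 = P 0 0 0" unfolding P_def zero_A_def by simp
lemma P_1: "1 = P 1 1 1" unfolding P_def one_A_def by simp
lemma P_x: "xA = P 0 1 0" unfolding P_def xA_def by simp
lemma P_y: "yA = P 0 0 1" unfolding P_def yA_def by simp
lemma P_sc: "sc b = P b b b" unfolding P_def sc_def by simp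
lemma P_c[simp]: "c0 (P u v w) = u" "c1 (P u v w) = u + v" "c2 (P u v w) = u + w"
  unfolding P_def by (simp_all)
lemma P_cases: obtains u v w where "a = P u v w"
proof -
  have "a = P (c0 a) (c0 a + c1 a) (c0 a + c2 a)"
    by (cases a) (simp only: P_def bring c0.simps c1.simps c2.simps)
  then show ?thesis using that by blast
qed

definition mkO :: "A \<Rightarrow> A \<Rightarrow> Om1" where "mkO a b = (\<lambda>i. case i of I1 \<Rightarrow> a | I2 \<Rightarrow> b)"
definition mkT :: "A \<Rightarrow> A \<Rightarrow> A \<Rightarrow> A \<Rightarrow> T2" where
  "mkT a b c d = (\<lambda>i j. case i of I1 \<Rightarrow> (case j of I1 \<Rightarrow> a | I2 \<Rightarrow> b) | I2 \<Rightarrow> (case j of I1 \<Rightarrow> c | I2 \<Rightarrow> d))"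

lemma mkO_app[simp]: "mkO a b I1 = a" "mkO a b I2 = b" unfolding mkO_def by simp_all
lemma mkT_app[simp]: "mkT a b c d I1 I1 = a" "mkT a b c d I1 I2 = b" "mkT a b c d I2 I1 = c" "mkT a b c d I2 I2 = d"
  unfolding mkT_def by simp_all
lemma mkO_eta: "w = mkO (w I1) (w I2)"
  unfolding mkO_def by (rule ext) (simp split: ix.split)
lemma mkT_eta: "t = mkT (t I1 I1) (t I1 I2) (t I2 I1) (t I2 I2)"
  unfolding mkT_def by (intro ext) (simp split: ix.split)
lemma mkO_eq[simp]: "mkO a b = mkO a' b' \<longleftrightarrow> a = a' \<and> b = b'"
  by (metis mkO_app)
lemma mkT_eq[simp]: "mkT a b c d = mkT a' b' c' d' \<longleftrightarrow> a = a' \<and> b = b' \<and> c = c' \<and> d = d'"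
  by (metis mkT_app)
lemma mkO_add[simp]: "mkO a b + mkO c d = mkO (a+c) (b+d)"
  by (simp add: mkO_def fun_eq_iff split: ix.split)
lemma mkT_add[simp]: "mkT a b c d + mkT a' b' c' d' = mkT (a+a') (b+b') (c+c') (d+d')"
  by (simp add: mkT_def fun_eq_iff split: ix.split)
lemma mkO_0: "(0::Om1) = mkO 0 0" by (subst mkO_eta) simp
lemma mkT_0: "(0::T2) = mkT 0 0 0 0" by (subst mkT_eta) simp

lemma sum_ix: "(\<Sum>i\<in>UNIV. f i) = f I1 + f I2"
  by (simp add: UNIV_ix)

lemma e_mk: "e I1 = mkO 1 0" "e I2 = mkO 0 1"
  by (subst mkO_eta; simp add: e_def)+
lemma lmul_mk[simp]: "lmul a (mkO b c) = mkO (a*b) (a*c)"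
  by (subst mkO_eta) (simp add: lmul_def)
lemma lmulT_mk[simp]: "lmulT a (mkT b c d f) = mkT (a*b) (a*c) (a*d) (a*f)"
  by (subst mkT_eta) (simp add: lmulT_def)

lemma gen_r_P: "gen_r I1 (P u v w) = mkO (P v u v) (P 0 (u+w) 0)"
   "gen_r I2 (P u v w) = mkO (P 0 0 (u+v)) (P w w u)"
  by (simp_all add: gen_r_def e_mk P_x P_y P_1 P_0 P_sc bring)

lemma d0_P: "d0 (P u v w) = mkO (P (u+v) (u+v) (u+v)) (P (u+w) (u+w) (u+w))"
  by (subst mkO_eta) (simp add: d0_def P_sc)

lemma tens_mk: "tens (mkO a b) (mkO c d) =
   mkT (a * gen_r I1 c I1 + b * gen_r I2 c I1)
       (a * gen_r I1 d I1 + b * gen_r I2 d I1)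
       (a * gen_r I1 c I2 + b * gen_r I2 c I2)
       (a * gen_r I1 d I2 + b * gen_r I2 d I2)"
  by (subst mkT_eta) (simp add: tens_def sum_ix)
lemma rmul_mk: "rmul (mkO a b) c = lmul a (gen_r I1 c) + lmul b (gen_r I2 c)"
  by (simp add: rmul_def lmul_def sum_ix plus_fun_def)
lemma rmulT_mk: "rmulT (mkT a b c d) f = lmulT a (tens (mkO 1 0) (rmul (mkO 1 0) f))
   + lmulT b (tens (mkO 1 0) (rmul (mkO 0 1) f)) + lmulT c (tens (mkO 0 1) (rmul (mkO 1 0) f))
   + lmulT d (tens (mkO 0 1) (rmul (mkO 0 1) f))"
  by (simp add: rmulT_def sum_ix e_mk add.assoc)
lemma wedgeT_mk: "wedgeT (mkT a b c d) = a * (P 1 0 1) + b * P 0 1 1 + c * P 0 1 1 + d * P 1 1 0"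
  by (simp add: wedgeT_def sum_ix P_x P_y P_1 add.assoc)
lemma col_mk: "col (mkT a b c d) I1 = mkO a c" "col (mkT a b c d) I2 = mkO b d"
  by (subst mkO_eta; simp add: col_def)+
lemma d1_mk: "d1 (mkO a b) = wedgeT (tens (d0 a) (mkO 1 0)) + wedgeT (tens (d0 b) (mkO 0 1))"
  by (simp add: d1_def wedge_def sum_ix e_mk)
lemma gen_r_mk: "gen_r I1 (P u v w) = mkO (P v u v) (P 0 (u+w) 0)"
   "gen_r I2 (P u v w) = mkO (P 0 0 (u+v)) (P w w u)"
  by (simp_all add: gen_r_def e_mk P_x P_y P_1 P_0 P_sc bring)
lemma d0_mk: "d0 (P u v w) = mkO (P (u+v) (u+v) (u+v)) (P (u+w) (u+w) (u+w))"
  by (subst mkO_eta) (simp add: d0_def P_sc)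
lemma gB_mk: "gB = mkT (P 1 1 0) (P 1 0 0) (P 1 0 0) (P 1 0 1)"
  by (subst mkT_eta) (simp add: P_x P_y P_1)

lemma P_01: "0 = P 0 0 0" "1 = P 1 1 1" "xA = P 0 1 0" "yA = P 0 0 1"
  by (simp_all add: P_0 P_1 P_x P_y)
lemma e_mk2: "e I1 = mkO (P 1 1 1) (P 0 0 0)" "e I2 = mkO (P 0 0 0) (P 1 1 1)"
  by (simp_all add: e_mk P_01)
lemma zO: "(0::Om1) = mkO (P 0 0 0) (P 0 0 0)" by (simp add: mkO_0 P_01)
lemma zT: "(0::T2) = mkT (P 0 0 0) (P 0 0 0) (P 0 0 0) (P 0 0 0)" by (simp add: mkT_0 P_01)
lemma gen_r_01: "gen_r I1 (P 0 0 0) = mkO (P 0 0 0) (P 0 0 0)"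
  by (simp add: gen_r_mk) 
lemmas ev = e_mk2 tens_mk rmul_mk rmulT_mk wedgeT_mk col_mk d1_mk gen_r_mk d0_mk lmul_mk lmulT_mk
  mkO_app mkT_app mkO_add mkT_add mkO_eq mkT_eq P_add P_mult P_eq P_uminus P_minus P_01 gB_mk
lemmas evs = ev zT zO bring bit_01 simp_thms

definition ipB :: "T2 \<Rightarrow> A" where
  "ipB t = t I1 I1 * P 1 0 1 + t I1 I2 * P 0 1 1 + t I2 I1 * P 0 1 1 + t I2 I2 * P 1 1 0"

lemma T2_cases: obtains a1 a2 a3 b1 b2 b3 c1 c2 c3 d1 d2 d3 where
  "t = mkT (P a1 a2 a3) (P b1 b2 b3) (P c1 c2 c3) (P d1 d2 d3)"
  by (metis mkT_eta P_cases)

lemma fun_ix_eq: "(f = g) \<longleftrightarrow> f I1 = g I1 \<and> f I2 = g I2" for f g :: "ix \<Rightarrow> 'a"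
proof
  assume "f I1 = g I1 \<and> f I2 = g I2"
  then show "f = g" by (intro ext) (metis ix.exhaust)
qed simp

lemma O_cases: obtains a1 a2 a3 b1 b2 b3 where "w = mkO (P a1 a2 a3) (P b1 b2 b3)"
  by (metis mkO_eta P_cases)

lemma central_gB: "central gB"
  unfolding central_def
proof
  fix a show "lmulT a gB = rmulT gB a"
    by (cases a rule: P_cases) (simp only: evs)
qed

lemma qsym_gB: "quantum_symmetric gB"
  unfolding quantum_symmetric_def by (simp only: evs)

lemma ipB_bimod: "bimodule_map_A ipB"
  unfolding bimodule_map_A_def
proof (intro conjI allI)
  fix s t :: T2 show "ipB (s + t) = ipB s + ipB t"
    by (simp add: ipB_def algebra_simps)
next
  fix a and t :: T2 show "ipB (lmulT a t) = a * ipB t"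
    by (simp add: ipB_def lmulT_def algebra_simps)
next
  fix a and t :: T2 show "ipB (rmulT t a) = ipB t * a"
    by (cases a rule: P_cases; cases t rule: T2_cases) (simp only: ipB_def evs)
qed

lemma inv_gB: "inverse_of gB ipB"
  unfolding inverse_of_def
proof (intro conjI allI ipB_bimod)
  fix \<eta> :: Om1
  show "(\<lambda>j. \<Sum>i\<in>UNIV. ipB (tens \<eta> (lmul (gB i j) (e i)))) = \<eta>"
    apply (cases \<eta> rule: O_cases, hypsubst)
    apply (simp only: sum_ix fun_ix_eq)
    apply (simp only: ipB_def evs)
    done
  show "(\<Sum>i\<in>UNIV. \<Sum>j\<in>UNIV. lmul (gB i j) (rmul (e i) (ipB (tens (e j) \<eta>)))) = \<eta>"
    apply (cases \<eta> rule: O_cases)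
    apply (simp only: sum_ix ipB_def evs)
    done
qed



definition ipM :: "T2 \<Rightarrow> T2 \<Rightarrow> A" where
  "ipM G t = t I1 I1 * G I1 I1 + t I1 I2 * G I1 I2 + t I2 I1 * G I2 I1 + t I2 I2 * G I2 I2"
lemmas bsolve = bring bit_01 simp_thms

lemma solveA: fixes g0 g1 g2 g3 g4 g5 g6 g7 g8 g9 g10 g11 G0 G1 G2 G3 G4 G5 G6 G7 G8 G9 G10 G11 :: bit shows
  "lmulT xA (mkT (P g0 g1 g2) (P g3 g4 g5) (P g6 g7 g8) (P g9 g10 g11)) = rmulT (mkT (P g0 g1 g2) (P g3 g4 g5) (P g6 g7 g8) (P g9 g10 g11)) xA \<and> lmulT yA (mkT (P g0 g1 g2) (P g3 g4 g5) (P g6 g7 g8) (P g9 g10 g11)) = rmulT (mkT (P g0 g1 g2) (P g3 g4 g5) (P g6 g7 g8) (P g9 g10 g11)) yA \<and> wedgeT (mkT (P g0 g1 g2) (P g3 g4 g5) (P g6 g7 g8) (P g9 g10 g11)) = 0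
   \<and> (\<lambda>j. \<Sum>i\<in>UNIV. ipM (mkT (P G0 G1 G2) (P G3 G4 G5) (P G6 G7 G8) (P G9 G10 G11)) (tens (e I1) (lmul ((mkT (P g0 g1 g2) (P g3 g4 g5) (P g6 g7 g8) (P g9 g10 g11)) i j) (e i)))) = e I1 \<and> (\<lambda>j. \<Sum>i\<in>UNIV. ipM (mkT (P G0 G1 G2) (P G3 G4 G5) (P G6 G7 G8) (P G9 G10 G11)) (tens (e I2) (lmul ((mkT (P g0 g1 g2) (P g3 g4 g5) (P g6 g7 g8) (P g9 g10 g11)) i j) (e i)))) = e I2 \<longrightarrow> mkT (P g0 g1 g2) (P g3 g4 g5) (P g6 g7 g8) (P g9 g10 g11) = gB"
  apply (simp only: sum_ix fun_ix_eq ipM_def evs)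
  apply (cases g4; (simp only: bsolve)?; cases g8; (simp only: bsolve)?; cases g2; (simp only: bsolve)?; cases g10; (simp only: bsolve)?; cases g5; (simp only: bsolve)?; cases g7; (simp only: bsolve)?; cases g0; (simp only: bsolve)?; cases g3; (simp only: bsolve)?; cases g9; (simp only: bsolve)?; cases g6; (simp only: bsolve)?; cases g1; (simp only: bsolve)?; cases g11; (simp only: bsolve)?; cases G0; (simp only: bsolve)?; cases G3; (simp only: bsolve)?; cases G1; (simp only: bsolve)?; cases G2; (simp only: bsolve)?; cases G5; (simp only: bsolve)?; cases G4; (simp only: bsolve)?; cases G6; (simp only: bsolve)?; cases G9; (simp only: bsolve)?; cases G7; (simp only: bsolve)?; cases G10; (simp only: bsolve)?; cases G8; (simp only: bsolve)?; cases G11; (simp only: bsolve)?)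
  done

lemma ip_form:
  assumes "bimodule_map_A ip"
  shows "ip t = ipM (mkT (ip (mkT 1 0 0 0)) (ip (mkT 0 1 0 0)) (ip (mkT 0 0 1 0)) (ip (mkT 0 0 0 1))) t"
proof -
  have dec: "t = lmulT (t I1 I1) (mkT 1 0 0 0) + lmulT (t I1 I2) (mkT 0 1 0 0)
     + lmulT (t I2 I1) (mkT 0 0 1 0) + lmulT (t I2 I2) (mkT 0 0 0 1)"
    by (subst mkT_eta[of t]) simp
  have add: "\<And>s u. ip (s + u) = ip s + ip u" and lin: "\<And>a u. ip (lmulT a u) = a * ip u"
    using assms unfolding bimodule_map_A_def by blast+
  have "ip t = t I1 I1 * ip (mkT 1 0 0 0) + t I1 I2 * ip (mkT 0 1 0 0)
     + t I2 I1 * ip (mkT 0 0 1 0) + t I2 I2 * ip (mkT 0 0 0 1)"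
    by (subst dec) (simp only: add lin)
  then show ?thesis by (simp add: ipM_def)
qed

lemma A_uniq:
  assumes inv: "inverse_of g ip" and cen: "central g" and qs: "quantum_symmetric g"
  shows "g = gB"
proof -
  define G where "G = mkT (ip (mkT 1 0 0 0)) (ip (mkT 0 1 0 0)) (ip (mkT 0 0 1 0)) (ip (mkT 0 0 0 1))"
  have bm: "bimodule_map_A ip" using inv unfolding inverse_of_def by blast
  have ipG: "\<And>t. ip t = ipM G t" unfolding G_def by (rule ip_form[OF bm])
  have c1: "\<And>\<eta>. (\<lambda>j. \<Sum>i\<in>UNIV. ipM G (tens \<eta> (lmul (g i j) (e i)))) = \<eta>"
    using inv unfolding inverse_of_def ipG by blast
  have cx: "lmulT xA g = rmulT g xA" and cy: "lmulT yA g = rmulT g yA"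
    using cen unfolding central_def by blast+
  have q: "wedgeT g = 0" using qs unfolding quantum_symmetric_def .
  obtain a1 a2 a3 b1 b2 b3 c1 c2 c3 d1 d2 d3 where
    g: "g = mkT (P a1 a2 a3) (P b1 b2 b3) (P c1 c2 c3) (P d1 d2 d3)" by (rule T2_cases)
  obtain a1' a2' a3' b1' b2' b3' c1' c2' c3' d1' d2' d3' where
    G: "G = mkT (P a1' a2' a3') (P b1' b2' b3') (P c1' c2' c3') (P d1' d2' d3')" by (rule T2_cases)
  show ?thesis
    using solveA[of a1 a2 a3 b1 b2 b3 c1 c2 c3 d1 d2 d3 a1' a2' a3' b1' b2' b3' c1' c2' c3' d1' d2' d3']
      cx cy q c1[of "e I1"] c1[of "e I2"] unfolding g G by blast
qed

lemma all_ix: "(\<forall>l. Q l) \<longleftrightarrow> Q I1 \<and> Q I2" by (metis ix.exhaust)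

definition nabN :: "T2 \<Rightarrow> T2 \<Rightarrow> Om1 \<Rightarrow> T2" where
  "nabN N1 N2 w = lmulT (w I1) N1 + tens (d0 (w I1)) (e I1) + lmulT (w I2) N2 + tens (d0 (w I2)) (e I2)"
definition sigN :: "T2 \<Rightarrow> T2 \<Rightarrow> T2 \<Rightarrow> T2" where
  "sigN N1 N2 t = lmulT (t I1 I1) (nabN N1 N2 (rmul (e I1) xA) + rmulT N1 xA)
     + lmulT (t I1 I2) (nabN N1 N2 (rmul (e I1) yA) + rmulT N1 yA)
     + lmulT (t I2 I1) (nabN N1 N2 (rmul (e I2) xA) + rmulT N2 xA)
     + lmulT (t I2 I2) (nabN N1 N2 (rmul (e I2) yA) + rmulT N2 yA)"

lemma solveQ: fixes v0 v1 v2 v3 v4 v5 v6 v7 v8 v9 v10 v11 v12 v13 v14 v15 v16 v17 v18 v19 v20 v21 v22 v23 :: bit shows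
  "wedgeT (nabN (mkT (P v0 v1 v2) (P v3 v4 v5) (P v6 v7 v8) (P v9 v10 v11)) (mkT (P v12 v13 v14) (P v15 v16 v17) (P v18 v19 v20) (P v21 v22 v23)) (e I1)) = d1 (e I1) \<and> wedgeT (nabN (mkT (P v0 v1 v2) (P v3 v4 v5) (P v6 v7 v8) (P v9 v10 v11)) (mkT (P v12 v13 v14) (P v15 v16 v17) (P v18 v19 v20) (P v21 v22 v23)) (e I2)) = d1 (e I2)
   \<and> metric_compatible gB (nabN (mkT (P v0 v1 v2) (P v3 v4 v5) (P v6 v7 v8) (P v9 v10 v11)) (mkT (P v12 v13 v14) (P v15 v16 v17) (P v18 v19 v20) (P v21 v22 v23))) (sigN (mkT (P v0 v1 v2) (P v3 v4 v5) (P v6 v7 v8) (P v9 v10 v11)) (mkT (P v12 v13 v14) (P v15 v16 v17) (P v18 v19 v20) (P v21 v22 v23))) \<longrightarrow>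
   (mkT (P v0 v1 v2) (P v3 v4 v5) (P v6 v7 v8) (P v9 v10 v11) = mkT (P 1 0 0) (P 1 0 0) (P 1 0 0) (P 1 0 1) \<and> mkT (P v12 v13 v14) (P v15 v16 v17) (P v18 v19 v20) (P v21 v22 v23) = mkT (P 1 1 0) (P 1 0 0) (P 1 0 0) (P 1 0 0)) \<or> (mkT (P v0 v1 v2) (P v3 v4 v5) (P v6 v7 v8) (P v9 v10 v11) = mkT (P 1 0 1) (P 1 0 0) (P 1 1 1) (P 1 1 1) \<and> mkT (P v12 v13 v14) (P v15 v16 v17) (P v18 v19 v20) (P v21 v22 v23) = mkT (P 1 1 1) (P 0 0 0) (P 1 0 1) (P 1 0 0)) \<or> (mkT (P v0 v1 v2) (P v3 v4 v5) (P v6 v7 v8) (P v9 v10 v11) = mkT (P 1 0 1) (P 1 1 0) (P 0 1 1) (P 1 0 1) \<and> mkT (P v12 v13 v14) (P v15 v16 v17) (P v18 v19 v20) (P v21 v22 v23) = mkT (P 1 1 0) (P 0 1 1) (P 1 0 1) (P 1 1 0)) \<or> (mkT (P v0 v1 v2) (P v3 v4 v5) (P v6 v7 v8) (P v9 v10 v11) = mkT (P 1 0 0) (P 1 1 0) (P 0 0 0) (P 1 1 1) \<and> mkT (P v12 v13 v14) (P v15 v16 v17) (P v18 v19 v20) (P v21 v22 v23) = mkT (P 1 1 1) (P 1 1 1) (P 1 0 0) (P 1 1 0))"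
  apply (simp only: metric_compatible_def all_ix sum_ix nabN_def sigN_def evs)
  apply (cases v0; (simp only: bsolve)?; cases v9; (simp only: bsolve)?; cases v1; (simp only: bsolve)?; cases v2; (simp only: bsolve)?; cases v3; (simp only: bsolve)?; cases v4; (simp only: bsolve)?; cases v16; (simp only: bsolve)?; cases v6; (simp only: bsolve)?; cases v5; (simp only: bsolve)?; cases v8; (simp only: bsolve)?; cases v13; (simp only: bsolve)?; cases v11; (simp only: bsolve)?; cases v22; (simp only: bsolve)?; cases v10; (simp only: bsolve)?; cases v7; (simp only: bsolve)?; cases v19; (simp only: bsolve)?; cases v12; (simp only: bsolve)?; cases v20; (simp only: bsolve)?; cases v15; (simp only: bsolve)?; cases v21; (simp only: bsolve)?; cases v23; (simp only: bsolve)?; cases v14; (simp only: bsolve)?; cases v17; (simp only: bsolve)?; cases v18; (simp only: bsolve)?)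
  done

lemma solveC: fixes G0 G1 G2 G3 G4 G5 G6 G7 G8 G9 G10 G11 :: bit shows
  "(\<Sum>i\<in>UNIV. \<Sum>j\<in>UNIV. lmul (gB i j) (rmul (e i) (ipM (mkT (P G0 G1 G2) (P G3 G4 G5) (P G6 G7 G8) (P G9 G10 G11)) (tens (e j) (e I1))))) = e I1 \<and> (\<Sum>i\<in>UNIV. \<Sum>j\<in>UNIV. lmul (gB i j) (rmul (e i) (ipM (mkT (P G0 G1 G2) (P G3 G4 G5) (P G6 G7 G8) (P G9 G10 G11)) (tens (e j) (e I2))))) = e I2 \<longrightarrow> mkT (P G0 G1 G2) (P G3 G4 G5) (P G6 G7 G8) (P G9 G10 G11) = mkT (P 1 0 1) (P 0 1 1) (P 0 1 1) (P 1 1 0)"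
  apply (simp only: sum_ix ipM_def evs)
  apply (cases G0; (simp only: bsolve)?; cases G2; (simp only: bsolve)?; cases G3; (simp only: bsolve)?; cases G5; (simp only: bsolve)?; cases G6; (simp only: bsolve)?; cases G7; (simp only: bsolve)?; cases G1; (simp only: bsolve)?; cases G8; (simp only: bsolve)?; cases G9; (simp only: bsolve)?; cases G10; (simp only: bsolve)?; cases G4; (simp only: bsolve)?; cases G11; (simp only: bsolve)?)
  done

lemma ipB_M: "ipB = ipM (mkT (P 1 0 1) (P 0 1 1) (P 0 1 1) (P 1 1 0))"
  by (rule ext) (simp add: ipB_def ipM_def)

lemma ip_unique:
  assumes inv: "inverse_of gB ip" shows "ip = ipB"
proof -
  define G where "G = mkT (ip (mkT 1 0 0 0)) (ip (mkT 0 1 0 0)) (ip (mkT 0 0 1 0)) (ip (mkT 0 0 0 1))"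
  have bm: "bimodule_map_A ip" using inv unfolding inverse_of_def by blast
  have ipG: "\<And>t. ip t = ipM G t" unfolding G_def by (rule ip_form[OF bm])
  have c2: "\<And>\<eta>. (\<Sum>i\<in>UNIV. \<Sum>j\<in>UNIV. lmul (gB i j) (rmul (e i) (ipM G (tens (e j) \<eta>)))) = \<eta>"
    using inv unfolding inverse_of_def ipG by blast
  obtain a1' a2' a3' b1' b2' b3' c1' c2' c3' d1' d2' d3' where
    G: "G = mkT (P a1' a2' a3') (P b1' b2' b3') (P c1' c2' c3') (P d1' d2' d3')" by (rule T2_cases)
  have "G = mkT (P 1 0 1) (P 0 1 1) (P 0 1 1) (P 1 1 0)"
    using solveC[of a1' a2' a3' b1' b2' b3' c1' c2' c3' d1' d2' d3'] c2[of "e I1"] c2[of "e I2"]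
    unfolding G by blast
  then show ?thesis using ipG ipB_M by auto
qed

lemma ipB_gB: "ipB gB = 0"
  by (simp only: ipB_def evs)

lemma sigN_add: "sigN N1 N2 (t + u) = sigN N1 N2 t + sigN N1 N2 u"
  by (simp add: sigN_def lmulT_def fun_eq_iff algebra_simps)
lemma sigN_lmul: "sigN N1 N2 (lmulT a t) = lmulT a (sigN N1 N2 t)"
  by (simp add: sigN_def lmulT_def fun_eq_iff algebra_simps)
definition "NA1 = mkT (P 1 0 0) (P 1 0 0) (P 1 0 0) (P 1 0 1)"
definition "NB1 = mkT (P 1 1 0) (P 1 0 0) (P 1 0 0) (P 1 0 0)"
definition "NA2 = mkT (P 1 0 1) (P 1 0 0) (P 1 1 1) (P 1 1 1)"
definition "NB2 = mkT (P 1 1 1) (P 0 0 0) (P 1 0 1) (P 1 0 0)"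
definition "NA3 = mkT (P 1 0 1) (P 1 1 0) (P 0 1 1) (P 1 0 1)"
definition "NB3 = mkT (P 1 1 0) (P 0 1 1) (P 1 0 1) (P 1 1 0)"
definition "NA4 = mkT (P 1 0 0) (P 1 1 0) (P 0 0 0) (P 1 1 1)"
definition "NB4 = mkT (P 1 1 1) (P 1 1 1) (P 1 0 0) (P 1 1 0)"

lemmas Ndefs = NA1_def NB1_def NA2_def NB2_def NA3_def NB3_def NA4_def NB4_def

lemma QLC_mem1: "(nabN NA1 NB1, sigN NA1 NB1) \<in> QLC gB"
  unfolding QLC_def bimodule_connection_def torsion_free_def bimodule_map_T_def
proof (simp only: mem_Collect_eq case_prod_conv, intro conjI allI)
  fix w v show "nabN NA1 NB1 (w + v) = nabN NA1 NB1 w + nabN NA1 NB1 v"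
    by (cases w rule: O_cases; cases v rule: O_cases) (simp only: nabN_def Ndefs evs)
next
  fix a w show "nabN NA1 NB1 (lmul a w) = lmulT a (nabN NA1 NB1 w) + tens (d0 a) w"
    by (cases w rule: O_cases; cases a rule: P_cases) (simp only: nabN_def Ndefs evs)
next
  fix t u show "sigN NA1 NB1 (t + u) = sigN NA1 NB1 t + sigN NA1 NB1 u" by (rule sigN_add)
next
  fix a t show "sigN NA1 NB1 (lmulT a t) = lmulT a (sigN NA1 NB1 t)" by (rule sigN_lmul)
next
  fix a t show "sigN NA1 NB1 (rmulT t a) = rmulT (sigN NA1 NB1 t) a"
    by (cases t rule: T2_cases; cases a rule: P_cases) (simp only: sigN_def nabN_def Ndefs evs)
next
  fix a w show "nabN NA1 NB1 (rmul w a) = rmulT (nabN NA1 NB1 w) a + sigN NA1 NB1 (tens w (d0 a))"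
    by (cases w rule: O_cases; cases a rule: P_cases) (simp only: sigN_def nabN_def Ndefs evs)
next
  fix w show "wedgeT (nabN NA1 NB1 w) = d1 w"
    by (cases w rule: O_cases) (simp only: nabN_def Ndefs evs)
next
  show "metric_compatible gB (nabN NA1 NB1) (sigN NA1 NB1)"
    by (simp only: metric_compatible_def all_ix sum_ix sigN_def nabN_def Ndefs evs)
qed

lemma lap1: "ipB (nabN NA1 NB1 (d0 a)) = 0"
  by (cases a rule: P_cases) (simp only: ipB_def nabN_def Ndefs evs)

lemma curv1: "curvature (nabN NA1 NB1) \<eta> = \<eta>"
  by (cases \<eta> rule: O_cases, hypsubst) (simp only: curvature_def wedge_def fun_ix_eq sum_ix nabN_def Ndefs evs)

lemma QLC_mem2: "(nabN NA2 NB2, sigN NA2 NB2) \<in> QLC gB"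
  unfolding QLC_def bimodule_connection_def torsion_free_def bimodule_map_T_def
proof (simp only: mem_Collect_eq case_prod_conv, intro conjI allI)
  fix w v show "nabN NA2 NB2 (w + v) = nabN NA2 NB2 w + nabN NA2 NB2 v"
    by (cases w rule: O_cases; cases v rule: O_cases) (simp only: nabN_def Ndefs evs)
next
  fix a w show "nabN NA2 NB2 (lmul a w) = lmulT a (nabN NA2 NB2 w) + tens (d0 a) w"
    by (cases w rule: O_cases; cases a rule: P_cases) (simp only: nabN_def Ndefs evs)
next
  fix t u show "sigN NA2 NB2 (t + u) = sigN NA2 NB2 t + sigN NA2 NB2 u" by (rule sigN_add)
next
  fix a t show "sigN NA2 NB2 (lmulT a t) = lmulT a (sigN NA2 NB2 t)" by (rule sigN_lmul)
next
  fix a t show "sigN NA2 NB2 (rmulT t a) = rmulT (sigN NA2 NB2 t) a"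
    by (cases t rule: T2_cases; cases a rule: P_cases) (simp only: sigN_def nabN_def Ndefs evs)
next
  fix a w show "nabN NA2 NB2 (rmul w a) = rmulT (nabN NA2 NB2 w) a + sigN NA2 NB2 (tens w (d0 a))"
    by (cases w rule: O_cases; cases a rule: P_cases) (simp only: sigN_def nabN_def Ndefs evs)
next
  fix w show "wedgeT (nabN NA2 NB2 w) = d1 w"
    by (cases w rule: O_cases) (simp only: nabN_def Ndefs evs)
next
  show "metric_compatible gB (nabN NA2 NB2) (sigN NA2 NB2)"
    by (simp only: metric_compatible_def all_ix sum_ix sigN_def nabN_def Ndefs evs)
qed

lemma lap2: "ipB (nabN NA2 NB2 (d0 a)) = 0"
  by (cases a rule: P_cases) (simp only: ipB_def nabN_def Ndefs evs)

lemma curv2: "curvature (nabN NA2 NB2) \<eta> = 0"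
  by (cases \<eta> rule: O_cases, hypsubst) (simp only: curvature_def wedge_def fun_ix_eq sum_ix nabN_def Ndefs evs)

lemma QLC_mem3: "(nabN NA3 NB3, sigN NA3 NB3) \<in> QLC gB"
  unfolding QLC_def bimodule_connection_def torsion_free_def bimodule_map_T_def
proof (simp only: mem_Collect_eq case_prod_conv, intro conjI allI)
  fix w v show "nabN NA3 NB3 (w + v) = nabN NA3 NB3 w + nabN NA3 NB3 v"
    by (cases w rule: O_cases; cases v rule: O_cases) (simp only: nabN_def Ndefs evs)
next
  fix a w show "nabN NA3 NB3 (lmul a w) = lmulT a (nabN NA3 NB3 w) + tens (d0 a) w"
    by (cases w rule: O_cases; cases a rule: P_cases) (simp only: nabN_def Ndefs evs)
next
  fix t u show "sigN NA3 NB3 (t + u) = sigN NA3 NB3 t + sigN NA3 NB3 u" by (rule sigN_add)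
next
  fix a t show "sigN NA3 NB3 (lmulT a t) = lmulT a (sigN NA3 NB3 t)" by (rule sigN_lmul)
next
  fix a t show "sigN NA3 NB3 (rmulT t a) = rmulT (sigN NA3 NB3 t) a"
    by (cases t rule: T2_cases; cases a rule: P_cases) (simp only: sigN_def nabN_def Ndefs evs)
next
  fix a w show "nabN NA3 NB3 (rmul w a) = rmulT (nabN NA3 NB3 w) a + sigN NA3 NB3 (tens w (d0 a))"
    by (cases w rule: O_cases; cases a rule: P_cases) (simp only: sigN_def nabN_def Ndefs evs)
next
  fix w show "wedgeT (nabN NA3 NB3 w) = d1 w"
    by (cases w rule: O_cases) (simp only: nabN_def Ndefs evs)
next
  show "metric_compatible gB (nabN NA3 NB3) (sigN NA3 NB3)"
    by (simp only: metric_compatible_def all_ix sum_ix sigN_def nabN_def Ndefs evs)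
qed

lemma lap3: "ipB (nabN NA3 NB3 (d0 a)) = 0"
  by (cases a rule: P_cases) (simp only: ipB_def nabN_def Ndefs evs)

lemma curv3: "curvature (nabN NA3 NB3) \<eta> = 0"
  by (cases \<eta> rule: O_cases, hypsubst) (simp only: curvature_def wedge_def fun_ix_eq sum_ix nabN_def Ndefs evs)

lemma QLC_mem4: "(nabN NA4 NB4, sigN NA4 NB4) \<in> QLC gB"
  unfolding QLC_def bimodule_connection_def torsion_free_def bimodule_map_T_def
proof (simp only: mem_Collect_eq case_prod_conv, intro conjI allI)
  fix w v show "nabN NA4 NB4 (w + v) = nabN NA4 NB4 w + nabN NA4 NB4 v"
    by (cases w rule: O_cases; cases v rule: O_cases) (simp only: nabN_def Ndefs evs)
next
  fix a w show "nabN NA4 NB4 (lmul a w) = lmulT a (nabN NA4 NB4 w) + tens (d0 a) w"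
    by (cases w rule: O_cases; cases a rule: P_cases) (simp only: nabN_def Ndefs evs)
next
  fix t u show "sigN NA4 NB4 (t + u) = sigN NA4 NB4 t + sigN NA4 NB4 u" by (rule sigN_add)
next
  fix a t show "sigN NA4 NB4 (lmulT a t) = lmulT a (sigN NA4 NB4 t)" by (rule sigN_lmul)
next
  fix a t show "sigN NA4 NB4 (rmulT t a) = rmulT (sigN NA4 NB4 t) a"
    by (cases t rule: T2_cases; cases a rule: P_cases) (simp only: sigN_def nabN_def Ndefs evs)
next
  fix a w show "nabN NA4 NB4 (rmul w a) = rmulT (nabN NA4 NB4 w) a + sigN NA4 NB4 (tens w (d0 a))"
    by (cases w rule: O_cases; cases a rule: P_cases) (simp only: sigN_def nabN_def Ndefs evs)
next
  fix w show "wedgeT (nabN NA4 NB4 w) = d1 w"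
    by (cases w rule: O_cases) (simp only: nabN_def Ndefs evs)
next
  show "metric_compatible gB (nabN NA4 NB4) (sigN NA4 NB4)"
    by (simp only: metric_compatible_def all_ix sum_ix sigN_def nabN_def Ndefs evs)
qed

lemma lap4: "ipB (nabN NA4 NB4 (d0 a)) = 0"
  by (cases a rule: P_cases) (simp only: ipB_def nabN_def Ndefs evs)

lemma curv4: "curvature (nabN NA4 NB4) \<eta> = 0"
  by (cases \<eta> rule: O_cases, hypsubst) (simp only: curvature_def wedge_def fun_ix_eq sum_ix nabN_def Ndefs evs)

lemma A_self: "(a::A) + a = 0"
  by (cases a rule: P_cases) (simp only: evs)
lemma T2_self: "(t::T2) + t = 0"
  by (intro ext) (simp only: plus_fun_apply zero_fun_apply A_self)
lemma char2: "(x::T2) = y + z \<Longrightarrow> z = x + y"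
proof -
  assume "x = y + z"
  then have "x + y = (y + y) + z" by (simp add: algebra_simps)
  then show ?thesis by (simp add: T2_self)
qed

lemma QLC_form:
  assumes "(nab, sig) \<in> QLC gB"
  shows "nab = nabN (nab (e I1)) (nab (e I2)) \<and> sig = sigN (nab (e I1)) (nab (e I2))"
proof -
  define N1 where "N1 = nab (e I1)"
  define N2 where "N2 = nab (e I2)"
  have bc: "bimodule_connection nab sig" using assms unfolding QLC_def by blast
  have add: "\<And>w v. nab (w + v) = nab w + nab v"
    and lft: "\<And>a w. nab (lmul a w) = lmulT a (nab w) + tens (d0 a) w"
    and sadd: "\<And>t u. sig (t + u) = sig t + sig u"
    and slin: "\<And>a t. sig (lmulT a t) = lmulT a (sig t)"
    and rgt: "\<And>a w. nab (rmul w a) = rmulT (nab w) a + sig (tens w (d0 a))"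
    using bc unfolding bimodule_connection_def bimodule_map_T_def by blast+
  have nabeq: "\<And>w. nab w = nabN N1 N2 w"
  proof -
    fix w :: Om1
    have dec: "w = lmul (w I1) (e I1) + lmul (w I2) (e I2)"
      by (subst mkO_eta[of w]) (simp add: e_mk)
    have "nab w = nab (lmul (w I1) (e I1)) + nab (lmul (w I2) (e I2))"
      by (subst dec) (rule add)
    then show "nab w = nabN N1 N2 w"
      by (simp add: lft nabN_def N1_def N2_def add.assoc)
  qed
  have sE: "\<And>w a. sig (tens w (d0 a)) = nabN N1 N2 (rmul w a) + rmulT (nab w) a"
    using rgt char2 nabeq by metis
  have E11: "tens (e I1) (d0 xA) = mkT 1 0 0 0" and E12: "tens (e I1) (d0 yA) = mkT 0 1 0 0"
    and E21: "tens (e I2) (d0 xA) = mkT 0 0 1 0" and E22: "tens (e I2) (d0 yA) = mkT 0 0 0 1"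
    by (simp only: evs)+
  have sigeq: "\<And>t. sig t = sigN N1 N2 t"
  proof -
    fix t :: T2
    have dec: "t = lmulT (t I1 I1) (mkT 1 0 0 0) + lmulT (t I1 I2) (mkT 0 1 0 0)
       + lmulT (t I2 I1) (mkT 0 0 1 0) + lmulT (t I2 I2) (mkT 0 0 0 1)"
      by (subst mkT_eta[of t]) simp
    have "sig t = lmulT (t I1 I1) (sig (mkT 1 0 0 0)) + lmulT (t I1 I2) (sig (mkT 0 1 0 0))
       + lmulT (t I2 I1) (sig (mkT 0 0 1 0)) + lmulT (t I2 I2) (sig (mkT 0 0 0 1))"
      by (subst dec) (simp only: sadd slin)
    then show "sig t = sigN N1 N2 t"
      unfolding sigN_def by (simp only: E11[symmetric] E12[symmetric] E21[symmetric] E22[symmetric] sE N1_def N2_def)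
  qed
  have h1: "nab = nabN N1 N2" by (rule ext) (rule nabeq)
  have h2: "sig = sigN N1 N2" by (rule ext) (rule sigeq)
  show ?thesis using h1 h2 unfolding N1_def N2_def by blast
qed

lemma QLC_sub:
  assumes "(nab, sig) \<in> QLC gB"
  shows "(nab, sig) \<in> {(nabN NA1 NB1, sigN NA1 NB1), (nabN NA2 NB2, sigN NA2 NB2),
      (nabN NA3 NB3, sigN NA3 NB3), (nabN NA4 NB4, sigN NA4 NB4)}"
proof -
  define N1 where "N1 = nab (e I1)"
  define N2 where "N2 = nab (e I2)"
  have f: "nab = nabN N1 N2" "sig = sigN N1 N2"
    using QLC_form[OF assms] unfolding N1_def N2_def by blast+
  have tf: "\<And>w. wedgeT (nab w) = d1 w" and mc: "metric_compatible gB nab sig"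
    using assms unfolding QLC_def torsion_free_def by auto
  obtain a1 a2 a3 b1 b2 b3 c1 c2 c3 d1 d2 d3 where
    n1: "N1 = mkT (P a1 a2 a3) (P b1 b2 b3) (P c1 c2 c3) (P d1 d2 d3)" by (rule T2_cases)
  obtain a1' a2' a3' b1' b2' b3' c1' c2' c3' d1' d2' d3' where
    n2: "N2 = mkT (P a1' a2' a3') (P b1' b2' b3') (P c1' c2' c3') (P d1' d2' d3')" by (rule T2_cases)
  have "(N1 = NA1 \<and> N2 = NB1) \<or> (N1 = NA2 \<and> N2 = NB2) \<or> (N1 = NA3 \<and> N2 = NB3) \<or> (N1 = NA4 \<and> N2 = NB4)"
    using solveQ[of a1 a2 a3 b1 b2 b3 c1 c2 c3 d1 d2 d3 a1' a2' a3' b1' b2' b3' c1' c2' c3' d1' d2' d3']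
      tf[of "e I1"] tf[of "e I2"] mc unfolding f n1 n2 Ndefs by blast
  then show ?thesis using f by auto
qed

lemma QLC_eq: "QLC gB = {(nabN NA1 NB1, sigN NA1 NB1), (nabN NA2 NB2, sigN NA2 NB2),
      (nabN NA3 NB3, sigN NA3 NB3), (nabN NA4 NB4, sigN NA4 NB4)}"
  using QLC_sub QLC_mem1 QLC_mem2 QLC_mem3 QLC_mem4 by auto

lemma nabN_e1: "nabN NA1 NB1 (e I1) = NA1" "nabN NA2 NB2 (e I1) = NA2"
  "nabN NA3 NB3 (e I1) = NA3" "nabN NA4 NB4 (e I1) = NA4"
  by (simp only: nabN_def Ndefs evs)+

lemma NA_dist: "NA1 \<noteq> NA2" "NA1 \<noteq> NA3" "NA1 \<noteq> NA4" "NA2 \<noteq> NA3" "NA2 \<noteq> NA4" "NA3 \<noteq> NA4"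
  by (simp only: Ndefs evs)+

lemma nab_dist: "nabN NA1 NB1 \<noteq> nabN NA2 NB2" "nabN NA1 NB1 \<noteq> nabN NA3 NB3"
  "nabN NA1 NB1 \<noteq> nabN NA4 NB4" "nabN NA2 NB2 \<noteq> nabN NA3 NB3"
  "nabN NA2 NB2 \<noteq> nabN NA4 NB4" "nabN NA3 NB3 \<noteq> nabN NA4 NB4"
  by (metis nabN_e1 NA_dist)+

lemma e1_ne0: "e I1 \<noteq> 0"
  by (simp only: evs) 

lemma notflat1: "\<not> (\<forall>\<eta>. curvature (nabN NA1 NB1) \<eta> = 0)"
  using curv1 e1_ne0 by metis
lemma notid: "\<not> (\<forall>\<eta>. curvature (nabN NA2 NB2) \<eta> = \<eta>)"
  "\<not> (\<forall>\<eta>. curvature (nabN NA3 NB3) \<eta> = \<eta>)" "\<not> (\<forall>\<eta>. curvature (nabN NA4 NB4) \<eta> = \<eta>)"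
  using curv2 curv3 curv4 e1_ne0 by metis+

theorem mainTheorem7:
  shows "(\<forall>g. (invertible_metric g \<and> central g \<and> quantum_symmetric g) \<longleftrightarrow> g = gB)
    \<and> card (QLC gB) = 4
    \<and> card {c \<in> QLC gB. \<forall>\<eta>. curvature (fst c) \<eta> = 0} = 3
    \<and> card {c \<in> QLC gB. \<forall>\<eta>. curvature (fst c) \<eta> = \<eta>} = 1
    \<and> (\<forall>ip. inverse_of gB ip \<longrightarrow> ip gB = 0)
    \<and> (\<forall>c \<in> QLC gB. \<forall>ip. inverse_of gB ip \<longrightarrow> (\<forall>a. laplacian ip (fst c) a = 0))"
proof (intro conjI allI ballI impI)
  fix g show "(invertible_metric g \<and> central g \<and> quantum_symmetric g) \<longleftrightarrow> g = gB"
    using A_uniq inv_gB central_gB qsym_gB unfolding invertible_metric_def by blast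
next
  show "card (QLC gB) = 4"
    unfolding QLC_eq using nab_dist by simp
next
  have "{c \<in> QLC gB. \<forall>\<eta>. curvature (fst c) \<eta> = 0} =
     {(nabN NA2 NB2, sigN NA2 NB2), (nabN NA3 NB3, sigN NA3 NB3), (nabN NA4 NB4, sigN NA4 NB4)}"
    unfolding QLC_eq using notflat1 curv2 curv3 curv4 by auto
  then show "card {c \<in> QLC gB. \<forall>\<eta>. curvature (fst c) \<eta> = 0} = 3"
    using nab_dist by simp
next
  have "{c \<in> QLC gB. \<forall>\<eta>. curvature (fst c) \<eta> = \<eta>} = {(nabN NA1 NB1, sigN NA1 NB1)}"
    unfolding QLC_eq using notid curv1 by auto
  then show "card {c \<in> QLC gB. \<forall>\<eta>. curvature (fst c) \<eta> = \<eta>} = 1"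
    by simp
next
  fix ip assume a: "inverse_of gB ip"
  show "ip gB = 0" using ip_unique[OF a] ipB_gB by simp
next
  fix c ip a assume c: "c \<in> QLC gB" and "inverse_of gB ip"
  then have ip: "ip = ipB" using ip_unique by blast
  show "laplacian ip (fst c) a = 0"
    using c unfolding QLC_eq laplacian_def ip using lap1 lap2 lap3 lap4 by auto
qed

end
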